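(* Let $X$ satisfy assumptions (A) described in the context, with Lévy density $\nu$. Let $w\in\mathbb{R}^d$, $r\in(0,2]$, $B=B(w,r)$. Let $f:\mathbb{R}^d\to[0,\infty)$ be measurable with $\int_{\mathbb{R}^d}f(y)(\nu(y)\wedge1)\,dy<\infty$, and for $y\in B$ put $g(y)=\int_{B^c}f(z)\nu(y-z)\,dz$. Then $g$ is bounded on $B(w,r/2)$ and $$|g(y)-g(w)|\le c\,\frac{(g(w)\wedge g(y))\,|y-w|}{r},\qquad y\in B(w,r/2).$$ Also $g(w)\le c\,g(y)$ for $y\in B(w,r/2)$. Here $c$ depends only on $d,a_1,a_2$.
   Context: Assumptions (A): (H0) $X$ is a pure-jump isotropic Lévy process in $\mathbb{R}^d$ whose Lévy measure is infinite with density $\nu(x)=\nu(|x|)$. (H1) $\nu(r)$ is nonincreasing, absolutely continuous, $-\nu'(r)/r$ nonincreasing (with $\nu(r)=-\int_r^\infty\nu'(\rho)d\rho$), and for some $a_1$: $\nu(r)\le a_1\nu(r+1)$ for $r\ge1$, $\nu(r)\le a_1\nu(2r)$ for $0<r\le1$. (H2) There is $a_2$ such that for every $x_0$, $r\in(0,1]$ and every $h\ge0$ on $\mathbb{R}^d$ harmonic in $B(x_0,r)$, $\sup_{B(x_0,r/2)}h\le a_2\inf_{B(x_0,r/2)}h$ (a Borel $f$ is harmonic in open $D$ if $f(x)=E^xf(X_{\tau_B})$, absolutely convergent, for $x\in B$, for all bounded open $B$ with $\overline B\subset D$, $\tau_B=\inf\{t>0:X_t\notin B\}$). Throughout, unspecified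 constants $c$ depend only on $d,a_1,a_2$. *)

theory Defs
  imports "HOL-Probability.Probability"
begin

text \<open>Radial Levy density nu (a function of r = |x| > 0) satisfying (H1) with constant a1.\<close>
definition H1_density :: "real \<Rightarrow> (real \<Rightarrow> real) \<Rightarrow> bool" where
  "H1_density a1 \<nu> \<longleftrightarrow>
     (\<forall>r>0. \<nu> r \<ge> 0) \<and>
     (\<forall>r s. 0 < r \<longrightarrow> r \<le> s \<longrightarrow> \<nu> s \<le> \<nu> r) \<and>
     (\<exists>\<nu>'. (\<forall>r>0. set_integrable lborel {r..} \<nu>' \<and>
                     \<nu> r = - (LINT \<rho>:{r..}|lborel. \<nu>' \<rho>)) \<and>
           (\<forall>r s. 0 < r \<longrightarrow> r \<le> s \<longrightarrow> - \<nu>' s / s \<le> - \<nu>' r / r)) \<and>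
     (\<forall>r\<ge>1. \<nu> r \<le> a1 * \<nu> (r + 1)) \<and>
     (\<forall>r. 0 < r \<longrightarrow> r \<le> 1 \<longrightarrow> \<nu> r \<le> a1 * \<nu> (2 * r))"

definition levy_H0 :: "'m measure \<Rightarrow> (real \<Rightarrow> 'm \<Rightarrow> 'a::euclidean_space) \<Rightarrow> (real \<Rightarrow> real) \<Rightarrow> bool" where
  "levy_H0 M X \<nu> \<longleftrightarrow>
     prob_space M \<and>
     (\<forall>t\<ge>0. X t \<in> borel_measurable M) \<and>
     (\<forall>\<omega>\<in>space M. X 0 \<omega> = 0) \<and>
     (\<forall>\<omega>\<in>space M. \<forall>t\<ge>0. continuous (at_right t) (\<lambda>s. X s \<omega>) \<and>
                       (t > 0 \<longrightarrow> (\<exists>l. ((\<lambda>s. X s \<omega>) \<longlongrightarrow> l) (at_left t)))) \<and>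
     (\<forall>(n::nat) (tt::nat \<Rightarrow> real). tt 0 \<ge> 0 \<longrightarrow> (\<forall>i<n. tt i < tt (Suc i)) \<longrightarrow>
         prob_space.indep_vars M (\<lambda>_. borel) (\<lambda>i \<omega>. X (tt (Suc i)) \<omega> - X (tt i) \<omega>) {..<n}) \<and>
     (\<forall>s t. 0 \<le> s \<longrightarrow> 0 \<le> t \<longrightarrow>
         distr M borel (\<lambda>\<omega>. X (s + t) \<omega> - X s \<omega>) = distr M borel (X t)) \<and>
     (\<integral>\<^sup>+ (x::'a::euclidean_space). ennreal (min ((norm x)\<^sup>2) 1 * \<nu> (norm x)) \<partial>lborel) < \<infinity> \<and>
     (\<integral>\<^sup>+ (x::'a::euclidean_space). ennreal (\<nu> (norm x)) \<partial>lborel) = \<infinity> \<and>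
     (\<forall>t\<ge>0. \<forall>\<xi>.
         (LINT \<omega>|M. cis (\<xi> \<bullet> X t \<omega>)) =
         complex_of_real (exp (- t * enn2real (\<integral>\<^sup>+ x. ennreal ((1 - cos (\<xi> \<bullet> x)) * \<nu> (norm x)) \<partial>lborel))))"

text \<open>Position of the process started at x at its first exit time from B:
  X^x_{tau_B}, where X^x_t = x + X_t and tau_B = inf {t > 0. X^x_t \<notin> B}.\<close>
definition exit_pos :: "(real \<Rightarrow> 'm \<Rightarrow> 'a::real_normed_vector) \<Rightarrow> 'a \<Rightarrow> 'a set \<Rightarrow> 'm \<Rightarrow> 'a" where
  "exit_pos X x B \<omega> = x + X (Inf {t. t > 0 \<and> x + X t \<omega> \<notin> B}) \<omega>"

definition harmonic_in :: "'m measure \<Rightarrow> (real \<Rightarrow> 'm \<Rightarrow> 'a::euclidean_space) \<Rightarrow> 'a set \<Rightarrow> ('a \<Rightarrow> real) \<Rightarrow> bool" where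
  "harmonic_in M X D h \<longleftrightarrow>
     h \<in> borel_measurable borel \<and>
     (\<forall>B x. open B \<longrightarrow> bounded B \<longrightarrow> closure B \<subseteq> D \<longrightarrow> x \<in> B \<longrightarrow>
        integrable (completion M) (\<lambda>\<omega>. h (exit_pos X x B \<omega>)) \<and>
        h x = (LINT \<omega>|completion M. h (exit_pos X x B \<omega>)))"

definition harnack_H2 :: "'m measure \<Rightarrow> (real \<Rightarrow> 'm \<Rightarrow> 'a::euclidean_space) \<Rightarrow> real \<Rightarrow> bool" where
  "harnack_H2 M X a2 \<longleftrightarrow>
     (\<forall>x0 r h. 0 < r \<longrightarrow> r \<le> 1 \<longrightarrow> (\<forall>x. h x \<ge> 0) \<longrightarrow> harmonic_in M X (ball x0 r) h \<longrightarrow>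
        (\<forall>x\<in>ball x0 (r/2). \<forall>y\<in>ball x0 (r/2). h x \<le> a2 * h y))"

definition assumptions_A :: "real \<Rightarrow> real \<Rightarrow> 'm measure \<Rightarrow> (real \<Rightarrow> 'm \<Rightarrow> 'a::euclidean_space) \<Rightarrow> (real \<Rightarrow> real) \<Rightarrow> bool" where
  "assumptions_A a1 a2 M X \<nu> \<longleftrightarrow> levy_H0 M X \<nu> \<and> H1_density a1 \<nu> \<and> harnack_H2 M X a2"

end

theory Submission
  imports Defs
begin


lemma nu_step:
  fixes \<nu> \<nu>' :: "real \<Rightarrow> real"
  assumes int: "\<And>r. r>0 \<Longrightarrow> set_integrable lborel {r..} \<nu>' \<and> \<nu> r = - (LINT \<rho>:{r..}|lborel. \<nu>' \<rho>)"
    and psi: "\<And>r s. 0 < r \<Longrightarrow> r \<le> s \<Longrightarrow> - \<nu>' s / s \<le> - \<nu>' r / r"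
    and nn: "\<And>r. r > 0 \<Longrightarrow> \<nu> r \<ge> 0"
    and "0 < a'" "a' < a" "a \<le> b"
  shows "\<nu> a - \<nu> b \<le> b * (b - a) * \<nu> a' / (a' * (a - a'))"
proof -
  have diff: "\<nu> p - \<nu> q = (LINT \<rho>:{p..<q}|lborel. - \<nu>' \<rho>)" if "0 < p" "p \<le> q" for p q
  proof -
    have ip: "set_integrable lborel {p..} \<nu>'" using int that by auto
    have i1: "set_integrable lborel {p..<q} \<nu>'" by (rule set_integrable_subset[OF ip]) auto
    have i2: "set_integrable lborel {q..} \<nu>'" by (rule set_integrable_subset[OF ip]) (use that in auto)
    have "{p..} = {p..<q} \<union> {q..}" using that by auto
    then have "(LINT \<rho>:{p..}|lborel. \<nu>' \<rho>) = (LINT \<rho>:{p..<q}|lborel. \<nu>' \<rho>) + (LINT \<rho>:{q..}|lborel. \<nu>' \<rho>)"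
      using set_integral_Un[OF _ i1 i2] by (simp add: ivl_disj_int)
    moreover have "(LINT \<rho>:{p..<q}|lborel. - \<nu>' \<rho>) = - (LINT \<rho>:{p..<q}|lborel. \<nu>' \<rho>)"
      using i1 by (rule set_integral_uminus)
    ultimately show ?thesis using int[of p] int[of q] that by auto
  qed
  have ii: "set_integrable lborel {p..<q} \<nu>'" if "0 < p" for p q
    by (rule set_integrable_subset[of _ "{p..}"]) (use int that in auto)
  have ic: "set_integrable lborel {p..<q} (\<lambda>_. c)" for p q c :: real
    unfolding set_integrable_def
    by (cases "p \<le> q") (auto intro!: integrable_scaleR_left integrable_real_indicator simp: emeasure_lborel_Ico)
  have mc: "(LINT \<rho>:{p..<q}|lborel. (c::real)) = c * (q - p)" if "p \<le> q" for p q c :: real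
    using that by (subst set_integral_const) auto
  define \<psi> where "\<psi> = - \<nu>' a / a"
  show ?thesis
  proof (cases "\<psi> \<ge> 0")
    case False
    have "\<nu> a - \<nu> b = (LINT \<rho>:{a..<b}|lborel. - \<nu>' \<rho>)" using diff assms by auto
    also have "\<dots> \<le> (LINT \<rho>:{a..<b}|lborel. 0)"
    proof (rule set_integral_mono)
      show "set_integrable lborel {a..<b} (\<lambda>x. - \<nu>' x)" using ii[of a b] assms
        unfolding set_integrable_def by (auto dest: integrable_minus)
      show "set_integrable lborel {a..<b} (\<lambda>_. 0::real)" by (rule ic)
      fix x assume x: "x \<in> {a..<b}"
      have "- \<nu>' x / x \<le> \<psi>" unfolding \<psi>_def using psi[of a x] x assms by auto
      then have h0: "- \<nu>' x / x \<le> 0" using False by auto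
      have xp: "x > 0" using x assms by auto
      have "- \<nu>' x = x * (- \<nu>' x / x)" using xp by simp
      also have "\<dots> \<le> 0" using h0 xp by (intro mult_nonneg_nonpos) auto
      finally show "- \<nu>' x \<le> 0" .
    qed
    also have "\<dots> = 0" by simp
    finally have "\<nu> a - \<nu> b \<le> 0" .
    moreover have "0 \<le> b * (b - a) * \<nu> a' / (a' * (a - a'))"
    proof -
      have n1: "0 \<le> \<nu> a'" using nn assms(4) by blast
      have n2: "0 \<le> b * (b - a)" using assms(4-6) by auto
      have n3: "0 < a' * (a - a')" using assms(4-6) by auto
      show ?thesis using n1 n2 n3 by (meson divide_nonneg_pos mult_nonneg_nonneg)
    qed
    ultimately show ?thesis by linarith
  next
    case True
    have "\<nu> a - \<nu> b = (LINT \<rho>:{a..<b}|lborel. - \<nu>' \<rho>)" using diff assms by auto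
    also have "\<dots> \<le> (LINT \<rho>:{a..<b}|lborel. b * \<psi>)"
    proof (rule set_integral_mono)
      show "set_integrable lborel {a..<b} (\<lambda>x. - \<nu>' x)" using ii[of a b] assms
        unfolding set_integrable_def by (auto dest: integrable_minus)
      show "set_integrable lborel {a..<b} (\<lambda>_. b * \<psi>)" by (rule ic)
      fix x assume x: "x \<in> {a..<b}"
      have "- \<nu>' x / x \<le> \<psi>" unfolding \<psi>_def using psi[of a x] x assms by auto
      moreover have xp: "x > 0" using x assms(4-6) by auto
      ultimately have "x * (- \<nu>' x / x) \<le> x * \<psi>" by (intro mult_left_mono) auto
      then have "- \<nu>' x \<le> x * \<psi>" using xp by simp
      also have "\<dots> \<le> b * \<psi>" using x True by (intro mult_right_mono) auto
      finally show "- \<nu>' x \<le> b * \<psi>" .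
    qed
    also have "\<dots> = b * \<psi> * (b - a)" using assms by (simp add: mc)
    finally have up: "\<nu> a - \<nu> b \<le> b * \<psi> * (b - a)" .
    have "a' * \<psi> * (a - a') = (LINT \<rho>:{a'..<a}|lborel. a' * \<psi>)" using assms by (simp add: mc)
    also have "\<dots> \<le> (LINT \<rho>:{a'..<a}|lborel. - \<nu>' \<rho>)"
    proof (rule set_integral_mono)
      show "set_integrable lborel {a'..<a} (\<lambda>x. - \<nu>' x)" using ii[of a' a] assms
        unfolding set_integrable_def by (auto dest: integrable_minus)
      show "set_integrable lborel {a'..<a} (\<lambda>_. a' * \<psi>)" by (rule ic)
      fix x assume x: "x \<in> {a'..<a}"
      have "\<psi> \<le> - \<nu>' x / x" unfolding \<psi>_def using psi[of x a] x assms by auto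
      moreover have xp: "x > 0" using x assms(4-6) by auto
      ultimately have "x * \<psi> \<le> x * (- \<nu>' x / x)" by (intro mult_left_mono) auto
      then have "x * \<psi> \<le> - \<nu>' x" using xp by simp
      moreover have "a' * \<psi> \<le> x * \<psi>" using x True by (intro mult_right_mono) auto
      ultimately show "a' * \<psi> \<le> - \<nu>' x" by linarith
    qed
    also have "\<dots> = \<nu> a' - \<nu> a" using diff assms by auto
    also have "\<dots> \<le> \<nu> a'" using nn[of a] assms by auto
    finally have lo: "a' * \<psi> * (a - a') \<le> \<nu> a'" .
    have pos: "a' * (a - a') > 0" using assms by auto
    have "\<psi> \<le> \<nu> a' / (a' * (a - a'))" using lo pos by (simp add: le_divide_eq mult.commute mult.left_commute)
    then have "b * (b - a) * \<psi> \<le> b * (b - a) * (\<nu> a' / (a' * (a - a')))"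
      using assms by (intro mult_left_mono) auto
    then show ?thesis using up by (simp add: algebra_simps)
  qed
qed

lemma H1_unfold:
  assumes "H1_density a1 \<nu>"
  shows "\<And>r. r>0 \<Longrightarrow> \<nu> r \<ge> 0"
    and "\<And>r s. 0 < r \<Longrightarrow> r \<le> s \<Longrightarrow> \<nu> s \<le> \<nu> r"
    and "\<And>r. r \<ge> 1 \<Longrightarrow> \<nu> r \<le> a1 * \<nu> (r + 1)"
    and "\<And>r. 0 < r \<Longrightarrow> r \<le> 1 \<Longrightarrow> \<nu> r \<le> a1 * \<nu> (2 * r)"
    and "\<exists>\<nu>'. (\<forall>r>0. set_integrable lborel {r..} \<nu>' \<and>
                     \<nu> r = - (LINT \<rho>:{r..}|lborel. \<nu>' \<rho>)) \<and>
           (\<forall>r s. 0 < r \<longrightarrow> r \<le> s \<longrightarrow> - \<nu>' s / s \<le> - \<nu>' r / r)"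
  using assms unfolding H1_density_def by blast+

lemma nu_pos:
  assumes H: "H1_density a1 \<nu>"
    and inf: "(\<integral>\<^sup>+ (x::'a::euclidean_space). ennreal (\<nu> (norm x)) \<partial>lborel) = \<infinity>"
  shows "\<And>t. t > 0 \<Longrightarrow> \<nu> t > 0"
proof -
  note h = H1_unfold[OF H]
  have n1: "\<nu> 1 > 0"
  proof (rule ccontr)
    assume "\<not> \<nu> 1 > 0"
    then have z1: "\<nu> 1 = 0" using h(1)[of 1] by auto
    have zn: "\<nu> ((1/2)^n) = 0" for n
    proof (induction n)
      case 0 then show ?case using z1 by simp
    next
      case (Suc n)
      have "\<nu> ((1/2)^Suc n) \<le> a1 * \<nu> (2 * (1/2)^Suc n)"
        by (rule h(4)) (use power_le_one[of "1/2::real" n] in auto)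
      also have "2 * (1/2::real)^Suc n = (1/2)^n" by simp
      finally have "\<nu> ((1/2)^Suc n) \<le> 0" using Suc by simp
      moreover have "\<nu> ((1/2)^Suc n) \<ge> 0" by (rule h(1)) simp
      ultimately show ?case by linarith
    qed
    have zt: "\<nu> t = 0" if tp: "t > 0" for t
    proof -
      obtain n where n: "(1/2::real)^n < t" using real_arch_pow_inv[OF tp, of "1/2"] by auto
      have "\<nu> t \<le> \<nu> ((1/2)^n)" using n by (intro h(2)) auto
      then show ?thesis using zn[of n] h(1)[OF tp] by linarith
    qed
    have "(\<integral>\<^sup>+ (x::'a). ennreal (\<nu> (norm x)) \<partial>lborel) = (\<integral>\<^sup>+ (x::'a). 0 \<partial>lborel)"
      by (intro nn_integral_cong_AE eventually_mono[OF AE_lborel_singleton[of 0]]) (simp add: zt)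
    then show False using inf by simp
  qed
  have nn: "\<nu> (1 + real n) > 0" for n
  proof (induction n)
    case 0 then show ?case using n1 by simp
  next
    case (Suc n)
    have "\<nu> (1 + real n) \<le> a1 * \<nu> (1 + real n + 1)" by (rule h(3)) simp
    then have "\<nu> (1 + real (Suc n)) \<noteq> 0" using Suc by (auto simp: add_ac)
    moreover have "\<nu> (1 + real (Suc n)) \<ge> 0" by (rule h(1)) simp
    ultimately show ?case by linarith
  qed
  fix t :: real assume t: "t > 0"
  show "\<nu> t > 0"
  proof (cases "t \<le> 1")
    case True
    then show ?thesis using n1 h(2)[OF t True] by linarith
  next
    case False
    obtain n :: nat where "t \<le> real n" using real_arch_simple by blast
    then have "\<nu> (1 + real n) \<le> \<nu> t" using t by (intro h(2)) auto
    then show ?thesis using nn[of n] by linarith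
  qed
qed

lemma nu_compare:
  assumes H: "H1_density a1 \<nu>" and a1: "a1 \<ge> 0"
    and "0 < s" "s \<le> t" "t \<le> 2 * s" "t \<le> s + 1"
  shows "\<nu> s \<le> a1 * \<nu> t"
proof -
  note h = H1_unfold[OF H]
  show ?thesis
  proof (cases "s \<le> 1")
    case True
    have "\<nu> s \<le> a1 * \<nu> (2 * s)" using h(4) True assms by auto
    also have "\<dots> \<le> a1 * \<nu> t" using a1 assms by (intro mult_left_mono h(2)) auto
    finally show ?thesis .
  next
    case False
    have "\<nu> s \<le> a1 * \<nu> (s + 1)" using h(3) False by auto
    also have "\<dots> \<le> a1 * \<nu> t" using a1 assms by (intro mult_left_mono h(2)) auto
    finally show ?thesis .
  qed
qed

lemma nu_iter:
  assumes H: "H1_density a1 \<nu>" and a1: "a1 \<ge> 0" and "t \<ge> 1"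
  shows "\<nu> t \<le> a1 ^ n * \<nu> (t + real n)"
proof (induction n)
  case 0 then show ?case by simp
next
  case (Suc n)
  note h = H1_unfold[OF H]
  have "\<nu> (t + real n) \<le> a1 * \<nu> (t + real n + 1)" using h(3) assms by auto
  then have "a1 ^ n * \<nu> (t + real n) \<le> a1 ^ n * (a1 * \<nu> (t + real n + 1))"
    using a1 by (intro mult_left_mono) auto
  then show ?case using Suc by (simp add: algebra_simps)
qed

lemma ri1: fixes r s t uu vv :: real
  assumes "0 < r" "r / 2 < s" "s \<le> t" "t \<le> 2 * s" "0 \<le> uu" "uu \<le> vv"
  shows "t * (t - s) * uu / ((s / 2) * (s - s / 2)) \<le> 16 * vv * (t - s) / r"
proof -
  have sp: "s > 0" using assms by auto
  have e: "t * (t - s) * uu / ((s / 2) * (s - s / 2)) = 4 * (t * (t - s) * uu) / (s * s)" by (simp add: field_simps)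
  have "t * (t - s) * uu \<le> (2 * s) * (t - s) * vv" using assms by (intro mult_mono) auto
  then have "4 * (t * (t - s) * uu) / (s * s) \<le> 4 * ((2 * s) * (t - s) * vv) / (s * s)" using sp by (intro divide_right_mono mult_left_mono) auto
  also have "\<dots> = 8 * ((t - s) * vv) / s" using sp by (simp add: field_simps)
  also have "\<dots> \<le> 16 * ((t - s) * vv) / r"
  proof -
    have "(t - s) * vv \<ge> 0" using assms by auto
    moreover have "8 / s \<le> 16 / r" using assms sp by (simp add: field_simps)
    ultimately have "8 / s * ((t - s) * vv) \<le> 16 / r * ((t - s) * vv)" by (intro mult_right_mono)
    then show ?thesis by simp
  qed
  finally show ?thesis using e by (simp add: algebra_simps)
qed
lemma ri2: fixes r s t uu vv :: real
  assumes "0 < r" "r \<le> 2" "2 < s" "s\<le>t" "t\<le>s+1" "0\<le>uu" "uu\<le>vv"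
  shows "t * (t - s) * uu / ((s - 1) * (s - (s - 1))) \<le> 16 * vv * (t - s) / r"
proof -
  have e: "t * (t - s) * uu / ((s - 1) * (s - (s - 1))) = (t / (s - 1)) * ((t - s) * uu)" by simp
  have "t / (s - 1) \<le> 3" using assms by (simp add: field_simps)
  moreover have "(t - s) * uu \<le> (t - s) * vv" using assms by (intro mult_left_mono) auto
  ultimately have "(t / (s - 1)) * ((t - s) * uu) \<le> 3 * ((t - s) * vv)" using assms
    by (intro mult_mono) auto
  also have "\<dots> \<le> (16 / r) * ((t - s) * vv)"
  proof -
    have "(t - s) * vv \<ge> 0" using assms by auto
    moreover have "3 \<le> 16 / r" using assms by (simp add: field_simps)
    ultimately show ?thesis by (intro mult_right_mono)
  qed
  finally show ?thesis using e by (simp add: algebra_simps)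
qed

lemma nu_lip:
  assumes H: "H1_density a1 \<nu>" and a1: "a1 \<ge> 0"
    and r: "0 < r" "r \<le> 2" and st: "r/2 < s" "s \<le> t" "t \<le> s + r/2"
  shows "\<nu> s - \<nu> t \<le> 16 * (a1^2 * \<nu> t) * (t - s) / r"
proof -
  note h = H1_unfold[OF H]
  obtain \<nu>' where nu': "\<forall>r>0. set_integrable lborel {r..} \<nu>' \<and> \<nu> r = - (LINT \<rho>:{r..}|lborel. \<nu>' \<rho>)"
    "\<forall>r s. 0 < r \<longrightarrow> r \<le> s \<longrightarrow> - \<nu>' s / s \<le> - \<nu>' r / r"
    using h(5) by blast
  have step: "\<nu> a - \<nu> b \<le> b * (b - a) * \<nu> a' / (a' * (a - a'))"
    if "0 < a'" "a' < a" "a \<le> b" for a' a b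
    by (rule nu_step[of \<nu>' \<nu>]) (use nu' h(1) that in auto)
  have sp: "s > 0" using st r by auto
  have cs: "\<nu> s \<le> a1 * \<nu> t" by (rule nu_compare[OF H a1]) (use st r in auto)
  have nt: "\<nu> t \<ge> 0" using h(1) sp st by auto
  show ?thesis
  proof (cases "s \<le> 2")
    case True
    have "\<nu> (s/2) \<le> a1 * \<nu> s" by (rule nu_compare[OF H a1]) (use sp True in auto)
    also have "\<dots> \<le> a1 * (a1 * \<nu> t)" using cs a1 by (intro mult_left_mono)
    finally have N: "\<nu> (s/2) \<le> a1^2 * \<nu> t" by (simp add: power2_eq_square)
    have "\<nu> s - \<nu> t \<le> t * (t - s) * \<nu> (s/2) / ((s/2) * (s - s/2))"
      by (rule step) (use sp st in auto)
    also have "\<dots> \<le> 16 * (a1^2 * \<nu> t) * (t - s) / r"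
      by (rule ri1) (use r st N h(1)[of "s/2"] sp in auto)
    finally show ?thesis .
  next
    case False
    have "\<nu> (s - 1) \<le> a1 * \<nu> (s - 1 + 1)" by (rule h(3)) (use False in auto)
    also have "\<dots> \<le> a1 * (a1 * \<nu> t)" using cs a1 by (intro mult_left_mono) auto
    finally have N: "\<nu> (s - 1) \<le> a1^2 * \<nu> t" by (simp add: power2_eq_square)
    have "\<nu> s - \<nu> t \<le> t * (t - s) * \<nu> (s - 1) / ((s - 1) * (s - (s - 1)))"
      by (rule step) (use sp st False in auto)
    also have "\<dots> \<le> 16 * (a1^2 * \<nu> t) * (t - s) / r"
      by (rule ri2) (use r st N h(1)[of "s - 1"] False in auto)
    finally show ?thesis .
  qed
qed

lemma nu_tail:
  fixes w :: "'a::euclidean_space"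
  assumes H: "H1_density a1 \<nu>" and a1: "a1 \<ge> 0" and pos: "\<And>t. t > 0 \<Longrightarrow> \<nu> t > 0"
    and r: "r > 0"
  shows "\<exists>C\<ge>0. \<forall>z::'a. z \<notin> ball w r \<longrightarrow> z \<noteq> 0 \<longrightarrow> \<nu> (norm (w - z)) \<le> C * min (\<nu> (norm z)) 1"
proof -
  note h = H1_unfold[OF H]
  define N where "N = nat \<lceil>norm w\<rceil>"
  have Nw: "norm w \<le> real N" unfolding N_def by linarith
  define C1 where "C1 = a1 ^ N + \<nu> r / \<nu> (1 + real N)"
  have p1: "\<nu> (1 + real N) > 0" by (rule pos) simp
  have nr: "\<nu> r \<ge> 0" using h(1) r by auto
  have q0: "\<nu> r / \<nu> (1 + real N) \<ge> 0" using p1 nr by auto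
  have C1p: "C1 \<ge> 0" unfolding C1_def using a1 q0 by auto
  have A: "\<nu> (norm (w - z)) \<le> C1 * \<nu> (norm z)" and B: "\<nu> (norm (w - z)) \<le> \<nu> r"
    if z: "z \<notin> ball w r" "z \<noteq> 0" for z :: 'a
  proof -
    define d where "d = norm (w - z)"
    have dr: "d \<ge> r" using z unfolding d_def by (simp add: dist_norm)
    have nzp: "norm z > 0" using z by auto
    have tri: "norm z \<le> norm w + d" unfolding d_def using norm_triangle_ineq4[of w "w - z"] by simp
    have nnz: "\<nu> (norm z) \<ge> 0" using h(1) nzp by auto
    show "\<nu> (norm (w - z)) \<le> \<nu> r" using h(2)[OF r dr] unfolding d_def .
    show "\<nu> (norm (w - z)) \<le> C1 * \<nu> (norm z)"
    proof (cases "d \<ge> 1")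
      case True
      have "\<nu> d \<le> a1 ^ N * \<nu> (d + real N)" by (rule nu_iter[OF H a1 True])
      also have "\<dots> \<le> a1 ^ N * \<nu> (norm z)" using a1 tri Nw nzp by (intro mult_left_mono h(2)) auto
      also have "\<dots> \<le> C1 * \<nu> (norm z)" unfolding C1_def using nnz q0 by (intro mult_right_mono) auto
      finally show ?thesis unfolding d_def .
    next
      case False
      have "\<nu> (1 + real N) \<le> \<nu> (norm z)" using tri Nw nzp False by (intro h(2)) auto
      then have "\<nu> r / \<nu> (1 + real N) * \<nu> (1 + real N) \<le> \<nu> r / \<nu> (1 + real N) * \<nu> (norm z)"
        using q0 by (intro mult_left_mono)
      then have "\<nu> r \<le> \<nu> r / \<nu> (1 + real N) * \<nu> (norm z)" using p1 by simp
      also have "\<dots> \<le> C1 * \<nu> (norm z)" unfolding C1_def using nnz a1 by (intro mult_right_mono) auto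
      finally show ?thesis using h(2)[OF r dr] unfolding d_def by linarith
    qed
  qed
  show ?thesis
  proof (intro exI[of _ "C1 + \<nu> r"] conjI allI impI)
    show "0 \<le> C1 + \<nu> r" using C1p nr by simp
    fix z :: 'a assume z: "z \<notin> ball w r" "z \<noteq> 0"
    have nnz: "\<nu> (norm z) \<ge> 0" using h(1) z by auto
    show "\<nu> (norm (w - z)) \<le> (C1 + \<nu> r) * min (\<nu> (norm z)) 1"
    proof (cases "\<nu> (norm z) \<le> 1")
      case True
      have "C1 * \<nu> (norm z) \<le> (C1 + \<nu> r) * \<nu> (norm z)" using nr nnz by (intro mult_right_mono) auto
      then show ?thesis using A[OF z] True by simp
    next
      case False
      then show ?thesis using B[OF z] C1p by simp
    qed
  qed
qed

lemma nu_meas: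
  fixes y :: "'a::euclidean_space"
  assumes H: "H1_density a1 \<nu>" and e: "e > 0"
  shows "(\<lambda>z. \<nu> (max (norm (y - z)) e)) \<in> borel_measurable lebesgue"
proof -
  note h = H1_unfold[OF H]
  have "mono (\<lambda>t. - \<nu> (max t e))"
    unfolding mono_def using e by (auto intro!: h(2))
  then have "(\<lambda>t. - \<nu> (max t e)) \<in> borel_measurable borel" by (rule borel_measurable_mono)
  then have m1: "(\<lambda>t. \<nu> (max t e)) \<in> borel_measurable borel"
    using borel_measurable_uminus by fastforce
  have "(\<lambda>z::'a. z) \<in> borel_measurable lebesgue"
    by (rule measurable_completion) simp
  then have m2: "(\<lambda>z::'a. norm (y - z)) \<in> borel_measurable lebesgue" by measurable
  show ?thesis using measurable_compose[OF m2 m1] by (simp add: o_def)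
qed

lemma pair_bounds:
  assumes H: "H1_density a1 \<nu>" and a1: "a1 \<ge> 1"
    and r: "0 < r" "r \<le> 2" and st: "r/2 < s" "r/2 < t" "\<bar>s - t\<bar> \<le> r/2"
  shows "\<nu> s \<le> a1 * \<nu> t"
    and "\<bar>\<nu> s - \<nu> t\<bar> \<le> 16 * a1^2 * min (\<nu> s) (\<nu> t) * \<bar>s - t\<bar> / r"
proof -
  note h = H1_unfold[OF H]
  have sp: "s > 0" "t > 0" using st r by auto
  show "\<nu> s \<le> a1 * \<nu> t"
  proof (cases "s \<le> t")
    case True
    show ?thesis by (rule nu_compare[OF H]) (use a1 st r True in auto)
  next
    case False
    have "\<nu> s \<le> \<nu> t" using False sp by (intro h(2)) auto
    also have "\<dots> \<le> a1 * \<nu> t" using mult_right_mono[OF a1 h(1)[OF sp(2)]] by simp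
    finally show ?thesis .
  qed
  show "\<bar>\<nu> s - \<nu> t\<bar> \<le> 16 * a1^2 * min (\<nu> s) (\<nu> t) * \<bar>s - t\<bar> / r"
  proof (cases "s \<le> t")
    case True
    have m: "min (\<nu> s) (\<nu> t) = \<nu> t" using h(2)[OF sp(1) True] by simp
    have "\<nu> s - \<nu> t \<le> 16 * (a1^2 * \<nu> t) * (t - s) / r"
      by (rule nu_lip[OF H]) (use a1 st r True in auto)
    moreover have "\<nu> s - \<nu> t \<ge> 0" using h(2)[OF sp(1) True] by simp
    ultimately show ?thesis using m True by (simp add: algebra_simps)
  next
    case False
    have m: "min (\<nu> s) (\<nu> t) = \<nu> s" using h(2)[OF sp(2)] False by simp
    have "\<nu> t - \<nu> s \<le> 16 * (a1^2 * \<nu> s) * (s - t) / r"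
      by (rule nu_lip[OF H]) (use a1 st r False in auto)
    moreover have "\<nu> t - \<nu> s \<ge> 0" using h(2)[OF sp(2)] False by simp
    ultimately show ?thesis using m False by (simp add: algebra_simps)
  qed
qed

lemma nn_bound:
  fixes u v q :: "'b \<Rightarrow> real"
  assumes [measurable]: "v \<in> borel_measurable M" "q \<in> borel_measurable M"
    and nn: "\<And>x. 0 \<le> v x" "\<And>x. 0 \<le> q x" and e: "e \<ge> 0"
    and le: "\<And>x. u x \<le> v x + e * q x"
  shows "(\<integral>\<^sup>+ x. ennreal (u x) \<partial>M) \<le> (\<integral>\<^sup>+ x. ennreal (v x) \<partial>M) + ennreal e * (\<integral>\<^sup>+ x. ennreal (q x) \<partial>M)"
proof -
  have "(\<integral>\<^sup>+ x. ennreal (u x) \<partial>M) \<le> (\<integral>\<^sup>+ x. ennreal (v x) + ennreal e * ennreal (q x) \<partial>M)"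
  proof (rule nn_integral_mono)
    fix x
    have "ennreal (u x) \<le> ennreal (v x + e * q x)" using le by (rule ennreal_leI)
    also have "\<dots> = ennreal (v x) + ennreal e * ennreal (q x)"
      using nn e by (simp add: ennreal_plus ennreal_mult)
    finally show "ennreal (u x) \<le> ennreal (v x) + ennreal e * ennreal (q x)" .
  qed
  also have "\<dots> = (\<integral>\<^sup>+ x. ennreal (v x) \<partial>M) + ennreal e * (\<integral>\<^sup>+ x. ennreal (q x) \<partial>M)"
    by (simp add: nn_integral_add nn_integral_cmult)
  finally show ?thesis .
qed

lemma abs_min_le:
  fixes p q e :: real
  assumes "\<bar>p - q\<bar> \<le> e * min p q" "e \<ge> 0"
  shows "p \<le> q + e * q" "p \<le> q + e * p"
proof -
  have "e * min p q \<le> e * q" "e * min p q \<le> e * p" using assms(2) by (auto intro: mult_left_mono)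
  then show "p \<le> q + e * q" "p \<le> q + e * p" using assms(1) by linarith+
qed

lemma main_part:
  fixes X :: "real \<Rightarrow> 'm \<Rightarrow> 'a::euclidean_space" and w :: 'a and f :: "'a \<Rightarrow> real"
  assumes A: "assumptions_A a1 a2 M X \<nu>" and r0: "0 < r" and r2: "r \<le> 2"
    and fm: "f \<in> borel_measurable lebesgue" and fnn: "\<forall>y. f y \<ge> 0"
    and fi: "(\<integral>\<^sup>+ y. ennreal (f y * min (\<nu> (norm y)) 1) \<partial>lebesgue) < \<infinity>"
  shows "let g = (\<lambda>y. \<integral>\<^sup>+ z. ennreal (f z * \<nu> (norm (y - z))) * indicator (- ball w r) z \<partial>lebesgue)
      in (\<exists>K::real. \<forall>y\<in>ball w (r/2). g y \<le> ennreal K) \<and>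
         (\<forall>y\<in>ball w (r/2).
            \<bar>enn2real (g y) - enn2real (g w)\<bar>
              \<le> (16 * a1^2 + \<bar>a1\<bar> + 1) * min (enn2real (g w)) (enn2real (g y)) * dist y w / r) \<and>
         (\<forall>y\<in>ball w (r/2). g w \<le> ennreal (16 * a1^2 + \<bar>a1\<bar> + 1) * g y)"
proof -
  define c where "c = 16 * a1^2 + \<bar>a1\<bar> + 1"
  have Hd: "H1_density a1 \<nu>" and H0: "levy_H0 M X \<nu>" using A unfolding assumptions_A_def by auto
  have inf: "(\<integral>\<^sup>+ (x::'a). ennreal (\<nu> (norm x)) \<partial>lborel) = \<infinity>"
    using H0 unfolding levy_H0_def by blast
  note pos = nu_pos[OF Hd inf]
  note h = H1_unfold[OF Hd]
  have n1: "\<nu> 1 > 0" "\<nu> 2 > 0" using pos by auto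
  have a12: "\<nu> 1 \<le> a1 * \<nu> 2" using h(3)[of 1] by simp
  have a1p: "a1 > 0"
  proof (rule ccontr)
    assume "\<not> a1 > 0"
    then have "a1 * \<nu> 2 \<le> 0" using n1 by (simp add: mult_nonpos_nonneg)
    then show False using a12 n1 by linarith
  qed
  have a1g: "a1 \<ge> 1"
  proof (rule ccontr)
    assume "\<not> a1 \<ge> 1"
    have "a1 * \<nu> 2 \<le> a1 * \<nu> 1" using a1p h(2)[of 1 2] by (intro mult_left_mono) auto
    moreover have "a1 * \<nu> 1 < 1 * \<nu> 1" using \<open>\<not> a1 \<ge> 1\<close> n1 by (intro mult_strict_right_mono) auto
    ultimately show False using a12 by linarith
  qed
  have a10: "a1 \<ge> 0" using a1p by simp
  define F where "F y z = f z * \<nu> (norm (y - z)) * indicator (- ball w r) z" for y z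
  have Feq: "ennreal (f z * \<nu> (norm (y - z))) * indicator (- ball w r) z = ennreal (F y z)" for y z
    by (auto simp: F_def split: split_indicator)
  define G where "G y = (\<integral>\<^sup>+ z. ennreal (F y z) \<partial>lebesgue)" for y
  have far: "norm (y - z) > r/2" "norm (w - z) \<ge> r" "\<bar>norm (y - z) - norm (w - z)\<bar> \<le> dist y w"
    if y: "y \<in> ball w (r/2)" and z: "z \<notin> ball w r" for y z
  proof -
    have d1: "dist w y < r/2" using y by simp
    have d2: "dist w z \<ge> r" using z by simp
    have "dist w z \<le> dist w y + dist y z" by (rule dist_triangle)
    then show "norm (y - z) > r/2" using d1 d2 by (simp add: dist_norm)
    show "norm (w - z) \<ge> r" using d2 by (simp add: dist_norm)
    have "\<bar>norm (y - z) - norm (w - z)\<bar> \<le> norm ((y - z) - (w - z))" by (rule norm_triangle_ineq3)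
    then show "\<bar>norm (y - z) - norm (w - z)\<bar> \<le> dist y w" by (simp add: dist_norm)
  qed
  have Fmeas: "F y \<in> borel_measurable lebesgue" if y: "y \<in> ball w (r/2)" for y
  proof -
    have "F y = (\<lambda>z. f z * \<nu> (max (norm (y - z)) (r/2)) * indicator (- ball w r) z)"
    proof
      fix z show "F y z = f z * \<nu> (max (norm (y - z)) (r/2)) * indicator (- ball w r) z"
        using far[OF y, of z] unfolding F_def by (auto split: split_indicator simp: max_def)
    qed
    moreover have "(\<lambda>z. \<nu> (max (norm (y - z)) (r/2))) \<in> borel_measurable lebesgue"
      by (rule nu_meas[OF Hd]) (use r0 in simp)
    moreover have "(\<lambda>z::'a. indicator (- ball w r) z :: real) \<in> borel_measurable lebesgue"
      by (rule borel_measurable_indicator) (auto intro: measurable_completion)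
    ultimately show ?thesis using fm by simp
  qed
  have wb: "w \<in> ball w (r/2)" using r0 by simp
  have Fnn: "F y z \<ge> 0" if y: "y \<in> ball w (r/2)" for y z
  proof (cases "z \<in> ball w r")
    case False
    have "norm (y - z) > 0" using far(1)[OF y False] r0 by linarith
    then have "\<nu> (norm (y - z)) \<ge> 0" by (rule h(1))
    then show ?thesis using False fnn unfolding F_def by simp
  qed (simp add: F_def)
  have pw: "F w z \<le> a1 * F y z" "F y z \<le> a1 * F w z"
       "\<bar>F y z - F w z\<bar> \<le> (16 * a1^2 * (dist y w / r)) * min (F y z) (F w z)"
    if y: "y \<in> ball w (r/2)" for y z
  proof -
    have "(F w z \<le> a1 * F y z \<and> F y z \<le> a1 * F w z \<and>
       \<bar>F y z - F w z\<bar> \<le> (16 * a1^2 * (dist y w / r)) * min (F y z) (F w z))"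
    proof (cases "z \<in> ball w r")
      case True
      then show ?thesis unfolding F_def by simp
    next
      case False
      define s where "s = norm (y - z)"
      define t where "t = norm (w - z)"
      note fz = far[OF y False, folded s_def t_def]
      have dyw: "dist y w < r/2" using y by (simp add: dist_commute)
      have st: "r/2 < s" "r/2 < t" "\<bar>s - t\<bar> \<le> r/2" using fz dyw r0 by auto
      have ts: "r/2 < t" "r/2 < s" "\<bar>t - s\<bar> \<le> r/2" using st by (auto simp: abs_minus_commute)
      have b1: "\<nu> s \<le> a1 * \<nu> t" by (rule pair_bounds(1)[OF Hd a1g r0 r2 st])
      have b2: "\<nu> t \<le> a1 * \<nu> s" by (rule pair_bounds(1)[OF Hd a1g r0 r2 ts])
      have b3: "\<bar>\<nu> s - \<nu> t\<bar> \<le> 16 * a1^2 * min (\<nu> s) (\<nu> t) * \<bar>s - t\<bar> / r"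
        by (rule pair_bounds(2)[OF Hd a1g r0 r2 st])
      have mn: "min (\<nu> s) (\<nu> t) \<ge> 0" using h(1) st r0 by auto
      have "16 * a1^2 * min (\<nu> s) (\<nu> t) * \<bar>s - t\<bar> / r \<le> 16 * a1^2 * min (\<nu> s) (\<nu> t) * dist y w / r"
        using fz(3) mn r0 unfolding s_def t_def by (intro divide_right_mono mult_left_mono) auto
      with b3 have b3': "\<bar>\<nu> s - \<nu> t\<bar> \<le> (16 * a1^2 * (dist y w / r)) * min (\<nu> s) (\<nu> t)"
        by (simp add: algebra_simps)
      have Fy: "F y z = f z * \<nu> s" and Fw: "F w z = f z * \<nu> t" using False unfolding F_def s_def t_def by auto
      have f0: "f z \<ge> 0" using fnn by simp
      have "f z * \<nu> t \<le> f z * (a1 * \<nu> s)" using f0 b2 by (intro mult_left_mono)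
      moreover have "f z * \<nu> s \<le> f z * (a1 * \<nu> t)" using f0 b1 by (intro mult_left_mono)
      moreover have "f z * \<bar>\<nu> s - \<nu> t\<bar> \<le> f z * ((16 * a1^2 * (dist y w / r)) * min (\<nu> s) (\<nu> t))"
        using f0 b3' by (intro mult_left_mono)
      moreover have "\<bar>f z * \<nu> s - f z * \<nu> t\<bar> = f z * \<bar>\<nu> s - \<nu> t\<bar>"
        using f0 by (simp add: abs_mult right_diff_distrib[symmetric])
      moreover have "min (f z * \<nu> s) (f z * \<nu> t) = f z * min (\<nu> s) (\<nu> t)"
        using f0 by (simp add: min_mult_distrib_left)
      ultimately show ?thesis unfolding Fy Fw by (simp add: algebra_simps)
    qed
    then show "F w z \<le> a1 * F y z" "F y z \<le> a1 * F w z"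
       "\<bar>F y z - F w z\<bar> \<le> (16 * a1^2 * (dist y w / r)) * min (F y z) (F w z)" by auto
  qed
  obtain C where C: "C \<ge> 0" "\<forall>z::'a. z \<notin> ball w r \<longrightarrow> z \<noteq> 0 \<longrightarrow> \<nu> (norm (w - z)) \<le> C * min (\<nu> (norm z)) 1"
    using nu_tail[OF Hd a10 pos r0, of w] by blast
  define C' where "C' = C + 1"
  have C'p: "C' > 0" using C unfolding C'_def by simp
  have Gwfin: "G w < \<infinity>"
  proof -
    have "G w = (\<integral>\<^sup>+ z. ennreal C' * ennreal (F w z / C') \<partial>lebesgue)"
      unfolding G_def
    proof (intro nn_integral_cong)
      fix z
      have "ennreal C' * ennreal (F w z / C') = ennreal (C' * (F w z / C'))"
        using C'p Fnn[OF wb, of z] by (subst ennreal_mult[symmetric]) auto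
      then show "ennreal (F w z) = ennreal C' * ennreal (F w z / C')" using C'p by simp
    qed
    also have "\<dots> = ennreal C' * (\<integral>\<^sup>+ z. ennreal (F w z / C') \<partial>lebesgue)"
      by (intro nn_integral_cmult measurable_compose[OF borel_measurable_divide[OF Fmeas[OF wb] borel_measurable_const] measurable_ennreal])
    finally have eq1: "G w = ennreal C' * (\<integral>\<^sup>+ z. ennreal (F w z / C') \<partial>lebesgue)" .
    have le1: "(\<integral>\<^sup>+ z. ennreal (F w z / C') \<partial>lebesgue) \<le> (\<integral>\<^sup>+ y. ennreal (f y * min (\<nu> (norm y)) 1) \<partial>lebesgue)"
    proof (rule nn_integral_mono_AE)
      have ae: "AE z in lebesgue. z \<noteq> (0::'a)"
        by (rule AE_completion) (rule AE_lborel_singleton)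
      show "AE z in lebesgue. ennreal (F w z / C') \<le> ennreal (f z * min (\<nu> (norm z)) 1)"
        using ae
      proof (rule eventually_mono)
        fix z :: 'a assume z0: "z \<noteq> 0"
        show "ennreal (F w z / C') \<le> ennreal (f z * min (\<nu> (norm z)) 1)"
        proof (cases "z \<in> ball w r")
          case True then show ?thesis unfolding F_def by simp
        next
          case False
          have m0: "min (\<nu> (norm z)) 1 \<ge> 0" using h(1)[of "norm z"] z0 by auto
          have f0: "f z \<ge> 0" using fnn by simp
          have "\<nu> (norm (w - z)) \<le> C * min (\<nu> (norm z)) 1" using C(2) False z0 by blast
          also have "\<dots> \<le> C' * min (\<nu> (norm z)) 1" unfolding C'_def using m0 by (simp add: algebra_simps)
          finally have "f z * \<nu> (norm (w - z)) \<le> f z * (C' * min (\<nu> (norm z)) 1)"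
            using f0 by (intro mult_left_mono)
          then have "F w z / C' \<le> f z * min (\<nu> (norm z)) 1"
            using False C'p unfolding F_def by (simp add: divide_le_eq algebra_simps)
          then show ?thesis by (rule ennreal_leI)
        qed
      qed
    qed
    have "G w \<le> ennreal C' * (\<integral>\<^sup>+ y. ennreal (f y * min (\<nu> (norm y)) 1) \<partial>lebesgue)"
      using mult_left_mono[OF le1, of "ennreal C'"] eq1 by simp
    also have "\<dots> < \<infinity>" using fi by (simp add: ennreal_mult_less_top)
    finally show ?thesis .
  qed
  define Bw where "Bw = enn2real (G w)"
  have GwB: "G w = ennreal Bw" and Bw0: "Bw \<ge> 0" using Gwfin unfolding Bw_def
    by (auto simp: ennreal_enn2real_if less_top)
  have props: "G y \<le> ennreal (a1 * Bw) \<and> G w \<le> ennreal c * G y \<and>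
      \<bar>enn2real (G y) - enn2real (G w)\<bar> \<le> c * min (enn2real (G w)) (enn2real (G y)) * dist y w / r"
    if y: "y \<in> ball w (r/2)" for y
  proof -
    note my [measurable] = Fmeas[OF y]
    note mw [measurable] = Fmeas[OF wb]
    have zm: "(\<lambda>z::'a. 0::real) \<in> borel_measurable lebesgue" by simp
    have Gy1: "G y \<le> ennreal a1 * G w"
      using nn_bound[OF zm mw _ Fnn[OF wb] a10, of "F y"] pw(2)[OF y] unfolding G_def by simp
    have Gw1: "G w \<le> ennreal a1 * G y"
      using nn_bound[OF zm my _ Fnn[OF y] a10, of "F w"] pw(1)[OF y] unfolding G_def by simp
    have "ennreal a1 * G w < \<infinity>" using Gwfin by (simp add: ennreal_mult_less_top)
    then have Gyfin: "G y < \<infinity>" using Gy1 by (rule le_less_trans[rotated])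
    define A where "A = enn2real (G y)"
    have GyA: "G y = ennreal A" and A0: "A \<ge> 0" using Gyfin unfolding A_def
      by (auto simp: ennreal_enn2real_if less_top)
    define e where "e = 16 * a1^2 * (dist y w / r)"
    have e0: "e \<ge> 0" unfolding e_def using r0 by auto
    have am1: "F y z \<le> F w z + e * F w z" "F y z \<le> F w z + e * F y z"
      "F w z \<le> F y z + e * F y z" "F w z \<le> F y z + e * F w z" for z
    proof -
      have "\<bar>F y z - F w z\<bar> \<le> e * min (F y z) (F w z)" using pw(3)[OF y] unfolding e_def .
      then have q1: "\<bar>F y z - F w z\<bar> \<le> e * min (F y z) (F w z)" "\<bar>F w z - F y z\<bar> \<le> e * min (F w z) (F y z)"
        by (auto simp: min.commute abs_minus_commute)
      show "F y z \<le> F w z + e * F w z" "F y z \<le> F w z + e * F y z"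
        using abs_min_le[OF q1(1) e0] by (auto simp: min.commute)
      show "F w z \<le> F y z + e * F y z" "F w z \<le> F y z + e * F w z"
        using abs_min_le[OF q1(2) e0] by (auto simp: min.commute)
    qed
    have i1: "G y \<le> G w + ennreal e * G w"
      using nn_bound[OF mw mw Fnn[OF wb] Fnn[OF wb] e0, of "F y"] am1(1) unfolding G_def by simp
    have i2: "G y \<le> G w + ennreal e * G y"
      using nn_bound[OF mw my Fnn[OF wb] Fnn[OF y] e0, of "F y"] am1(2) unfolding G_def by simp
    have i3: "G w \<le> G y + ennreal e * G y"
      using nn_bound[OF my my Fnn[OF y] Fnn[OF y] e0, of "F w"] am1(3) unfolding G_def by simp
    have i4: "G w \<le> G y + ennreal e * G w"
      using nn_bound[OF my mw Fnn[OF y] Fnn[OF wb] e0, of "F w"] am1(4) unfolding G_def by simp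
    have conv: "ennreal p \<le> ennreal q + ennreal e * ennreal q' \<Longrightarrow> p \<le> q + e * q'"
      if "q \<ge> 0" "q' \<ge> 0" for p q q'
    proof -
      assume a: "ennreal p \<le> ennreal q + ennreal e * ennreal q'"
      have "ennreal q + ennreal e * ennreal q' = ennreal (q + e * q')"
        using that e0 by (simp add: ennreal_plus ennreal_mult)
      with a have "ennreal p \<le> ennreal (q + e * q')" by simp
      moreover have "q + e * q' \<ge> 0" using that e0 by simp
      ultimately show "p \<le> q + e * q'" by (simp add: ennreal_le_iff)
    qed
    have r1: "A \<le> Bw + e * Bw" using conv[OF Bw0 Bw0] i1 unfolding GyA GwB by simp
    have r2': "A \<le> Bw + e * A" using conv[OF Bw0 A0] i2 unfolding GyA GwB by simp
    have r3: "Bw \<le> A + e * A" using conv[OF A0 A0] i3 unfolding GyA GwB by simp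
    have r4: "Bw \<le> A + e * Bw" using conv[OF A0 Bw0] i4 unfolding GyA GwB by simp
    have "\<bar>A - Bw\<bar> \<le> e * min Bw A"
    proof (cases "Bw \<le> A")
      case True
      then have "min Bw A = Bw" "\<bar>A - Bw\<bar> = A - Bw" by auto
      then show ?thesis using r1 by simp
    next
      case False
      then have "min Bw A = A" "\<bar>A - Bw\<bar> = Bw - A" by auto
      then show ?thesis using r3 by simp
    qed
    also have "\<dots> \<le> c * min Bw A * dist y w / r"
    proof -
      have "16 * a1^2 \<le> c" unfolding c_def by simp
      moreover have "min Bw A * (dist y w / r) \<ge> 0" using A0 Bw0 r0 by auto
      ultimately have "16 * a1^2 * (min Bw A * (dist y w / r)) \<le> c * (min Bw A * (dist y w / r))"
        by (intro mult_right_mono)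
      then show ?thesis unfolding e_def by (simp add: algebra_simps)
    qed
    finally have L: "\<bar>A - Bw\<bar> \<le> c * min Bw A * dist y w / r" .
    have "G y \<le> ennreal (a1 * Bw)" using Gy1 a10 Bw0 unfolding GwB by (simp add: ennreal_mult)
    moreover have "G w \<le> ennreal c * G y"
    proof -
      have "ennreal a1 \<le> ennreal c" unfolding c_def by (intro ennreal_leI) (use zero_le_power2[of a1] in linarith)
      then have "ennreal a1 * G y \<le> ennreal c * G y" by (intro mult_right_mono) auto
      then show ?thesis using Gw1 by simp
    qed
    ultimately show ?thesis using L unfolding A_def Bw_def by simp
  qed
  have G_eq: "(\<lambda>y. \<integral>\<^sup>+ z. ennreal (f z * \<nu> (norm (y - z))) * indicator (- ball w r) z \<partial>lebesgue) = G"
    unfolding G_def by (simp add: Feq)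
  show ?thesis unfolding Let_def G_eq c_def[symmetric]
    using props by blast
qed


theorem lemma5p4:
  fixes a1 a2 :: real
  shows "\<exists>c>0. \<forall>(M::'m measure) (X::real \<Rightarrow> 'm \<Rightarrow> 'a::euclidean_space) \<nu> (w::'a) r f.
     assumptions_A a1 a2 M X \<nu> \<longrightarrow> 0 < r \<longrightarrow> r \<le> 2 \<longrightarrow>
     f \<in> borel_measurable lebesgue \<longrightarrow> (\<forall>y. f y \<ge> 0) \<longrightarrow>
     (\<integral>\<^sup>+ y. ennreal (f y * min (\<nu> (norm y)) 1) \<partial>lebesgue) < \<infinity> \<longrightarrow>
     (let g = (\<lambda>y. \<integral>\<^sup>+ z. ennreal (f z * \<nu> (norm (y - z))) * indicator (- ball w r) z \<partial>lebesgue)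
      in (\<exists>K::real. \<forall>y\<in>ball w (r/2). g y \<le> ennreal K) \<and>
         (\<forall>y\<in>ball w (r/2).
            \<bar>enn2real (g y) - enn2real (g w)\<bar>
              \<le> c * min (enn2real (g w)) (enn2real (g y)) * dist y w / r) \<and>
         (\<forall>y\<in>ball w (r/2). g w \<le> ennreal c * g y))"
proof -
  have cp: "0 < 16 * a1^2 + \<bar>a1\<bar> + 1" using zero_le_power2[of a1] abs_ge_zero[of a1] by linarith
  show ?thesis
    apply (rule exI[of _ "16 * a1^2 + \<bar>a1\<bar> + 1"])
    apply (intro conjI cp allI impI)
    apply (rule main_part)
         apply assumption+
    done
qed

end
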